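(* Let $G$ be a finite group, $S$ a generating set of $G$, and $X \subseteq S$. Assume: (i) $\langle X \rangle$ is abelian and nontrivial; (ii) for each $g \in G$, either $g$ centralizes every element of $\langle X \rangle$, or $g$ inverts every element of $\langle X \rangle$ (i.e., $g^{-1}yg = y^{-1}$ for all $y \in \langle X \rangle$); (iii) $\mathrm{Cay}(\langle X \rangle; X)$ has a hamiltonian cycle; and (iv) $\mathrm{Cay}(G/\langle X \rangle; S)$ has a hamiltonian path. Then $\mathrm{Cay}(G;S)$ has a hamiltonian cycle.
   Context: For a group $G$ and a subset $S \subseteq G$, the Cayley graph $\mathrm{Cay}(G;S)$ has vertex set $G$, with $g$ adjacent to $gs$ for every $g \in G$ and $s \in S \cup S^{-1}$. Hypothesis (ii) implies $\langle X \rangle$ is normal in $G$; $\mathrm{Cay}(G/\langle X \rangle;S)$ denotes the Cayley graph of the quotient group with respect to the image of $S$. A hamiltonian path visits every vertex exactly once. *)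

theory Defs
  imports "HOL-Algebra.Algebra"
begin

definition cay_adj :: "('a, 'b) monoid_scheme \<Rightarrow> 'a set \<Rightarrow> 'a \<Rightarrow> 'a \<Rightarrow> bool" where
  "cay_adj G S g h \<longleftrightarrow> (\<exists>s\<in>S. h = g \<otimes>\<^bsub>G\<^esub> s \<or> h = g \<otimes>\<^bsub>G\<^esub> inv\<^bsub>G\<^esub> s)"

definition ham_cycle :: "'a set \<Rightarrow> ('a \<Rightarrow> 'a \<Rightarrow> bool) \<Rightarrow> bool" where
  "ham_cycle V adj \<longleftrightarrow> (\<exists>vs. vs \<noteq> [] \<and> distinct vs \<and> set vs = V \<and>
      (\<forall>i < length vs. adj (vs ! i) (vs ! ((Suc i) mod length vs))))"

definition ham_path :: "'a set \<Rightarrow> ('a \<Rightarrow> 'a \<Rightarrow> bool) \<Rightarrow> bool" where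
  "ham_path V adj \<longleftrightarrow> (\<exists>vs. distinct vs \<and> set vs = V \<and>
      (\<forall>i. Suc i < length vs \<longrightarrow> adj (vs ! i) (vs ! Suc i)))"

end

theory Submission
  imports Defs
begin

definition gadj :: "nat \<Rightarrow> nat \<times> nat \<Rightarrow> nat \<times> nat \<Rightarrow> bool" where
  "gadj n p q \<longleftrightarrow> (fst p = fst q \<and> (snd q = Suc (snd p) mod n \<or> snd p = Suc (snd q) mod n))
     \<or> (snd p = snd q \<and> (fst q = Suc (fst p) \<or> fst p = Suc (fst q)))"

lemma row_fwd: "successively (gadj n) (map (\<lambda>j. (k, j)) [a..<b])" if "b \<le> n"
  using that
proof (induction b)
  case (Suc b)
  then show ?case
    by (cases "a \<le> b") (auto simp: successively_append_iff gadj_def last_map)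
qed simp

lemma row_bwd: "successively (gadj n) (map (\<lambda>j. (k, n - j)) [a..<b])" if "b \<le> n" "0 < a"
  using that
proof (induction b)
  case (Suc b)
  then show ?case
    by (cases "a \<le> b") (auto simp: successively_append_iff gadj_def last_map Suc_diff_Suc)
qed simp

lemma grid_path:
  assumes "n \<ge> 2"
  shows "\<exists>vs d. vs \<noteq> [] \<and> hd vs = (m, 0) \<and> last vs = (m, d) \<and> (d = 1 \<or> d = n - 1) \<and>
     distinct vs \<and> set vs = {0..<Suc m} \<times> {0..<n} \<and> successively (gadj n) vs"
proof (induction m)
  case 0
  show ?case
    apply (rule exI[of _ "map (\<lambda>j. (0, j)) [0..<n]"], rule exI[of _ "n - 1"])
    using assms by (auto simp: row_fwd distinct_map inj_on_def hd_map last_map hd_upt)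
next
  case (Suc m)
  then obtain vs d where v: "vs \<noteq> []" "hd vs = (m, 0)" "last vs = (m, d)" "d = 1 \<or> d = n - 1"
    "distinct vs" "set vs = {0..<Suc m} \<times> {0..<n}" "successively (gadj n) vs" by blast
  have g1: "gadj n (Suc m, 0) (m, 0)" "gadj n (m, d) (Suc m, d)" for d
    by (auto simp: gadj_def)
  show ?case
  proof (cases "d = 1")
    case True
    let ?r = "map (\<lambda>j. (Suc m, j)) [1..<n]"
    have "successively (gadj n) ?r" by (rule row_fwd) simp
    then show ?thesis
      apply (intro exI[of _ "(Suc m, 0) # vs @ ?r"] exI[of _ "n - 1"])
      using v True assms g1
      by (auto simp: distinct_map inj_on_def successively_append_iff successively_Cons
            hd_map last_map)
  next
    case False
    let ?r = "map (\<lambda>j. (Suc m, n - j)) [1..<n]"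
    have "successively (gadj n) ?r" by (rule row_bwd) simp_all
    have im: "(\<lambda>x. (Suc m, n - x)) ` {Suc 0..<n} = {Suc m} \<times> {Suc 0..<n}"
    proof (rule equalityI)
      show "{Suc m} \<times> {Suc 0..<n} \<subseteq> (\<lambda>x. (Suc m, n - x)) ` {Suc 0..<n}"
      proof clarify
        fix b assume "b \<in> {Suc 0..<n}"
        then show "(Suc m, b) \<in> (\<lambda>x. (Suc m, n - x)) ` {Suc 0..<n}"
          by (intro image_eqI[where x="n - b"]) auto
      qed
    qed auto
    note this \<open>successively (gadj n) ?r\<close>
    then show ?thesis
      apply (intro exI[of _ "(Suc m, 0) # vs @ ?r"] exI[of _ "1"])
      using v False assms g1 im
      by (auto simp: distinct_map inj_on_def successively_append_iff successively_Cons
            hd_map last_map)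
  qed
qed

lemma succ_nth: "successively P xs \<Longrightarrow> Suc i < length xs \<Longrightarrow> P (xs!i) (xs!Suc i)"
proof (induction P xs arbitrary: i rule: successively.induct)
  case (3 P x y xs) then show ?case by (cases i) auto
qed auto

lemma succ_cyc:
  assumes "successively P xs" "xs \<noteq> []" "P (last xs) (hd xs)"
  shows "\<forall>i<length xs. P (xs!i) (xs!(Suc i mod length xs))"
proof (intro allI impI)
  fix i assume i: "i < length xs"
  show "P (xs!i) (xs!(Suc i mod length xs))"
  proof (cases "Suc i < length xs")
    case True then show ?thesis using succ_nth[OF assms(1)] by simp
  next
    case False then have "i = length xs - 1" using i by simp
    then show ?thesis using assms(2,3) by (simp add: last_conv_nth hd_conv_nth)
  qed
qed

lemma cay_adj_sym:
  assumes "group G" "S \<subseteq> carrier G" "a \<in> carrier G" "b \<in> carrier G" "cay_adj G S a b"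
  shows "cay_adj G S b a"
proof -
  interpret group G by fact
  from assms(5) obtain s where s: "s \<in> S" "b = a \<otimes>\<^bsub>G\<^esub> s \<or> b = a \<otimes>\<^bsub>G\<^esub> inv\<^bsub>G\<^esub> s"
    unfolding cay_adj_def by blast
  have sc: "s \<in> carrier G" using s assms(2) by blast
  from s(2) show ?thesis
  proof
    assume "b = a \<otimes>\<^bsub>G\<^esub> s"
    then have "a = b \<otimes>\<^bsub>G\<^esub> inv\<^bsub>G\<^esub> s" using sc assms(3) by (simp add: m_assoc)
    then show ?thesis using s(1) unfolding cay_adj_def by blast
  next
    assume "b = a \<otimes>\<^bsub>G\<^esub> inv\<^bsub>G\<^esub> s"
    then have "a = b \<otimes>\<^bsub>G\<^esub> s" using sc assms(3) by (simp add: m_assoc)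
    then show ?thesis using s(1) unfolding cay_adj_def by blast
  qed
qed

theorem mainTheorem3:
  fixes G :: "('a, 'b) monoid_scheme" (structure) and S :: "'a set" and T :: "'a set"
  assumes "group G"
    and "finite (carrier G)"
    and "S \<subseteq> carrier G"
    and "generate G S = carrier G"
    and "T \<subseteq> S"
    and "\<forall>x\<in>generate G T. \<forall>y\<in>generate G T. x \<otimes> y = y \<otimes> x"
    and "generate G T \<noteq> {\<one>}"
    and "\<forall>g\<in>carrier G. (\<forall>y\<in>generate G T. g \<otimes> y = y \<otimes> g)
                        \<or> (\<forall>y\<in>generate G T. inv g \<otimes> y \<otimes> g = inv y)"
    and "ham_cycle (generate G T) (cay_adj G T)"
    and "ham_path (carrier (G Mod (generate G T)))
                  (cay_adj (G Mod (generate G T)) ((\<lambda>s. generate G T #> s) ` S))"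
  shows "ham_cycle (carrier G) (cay_adj G S)"
proof -
  interpret group G by fact
  define H where "H = generate G T"
  have TG: "T \<subseteq> carrier G" using assms(3,5) by blast
  have sgH: "subgroup H G" unfolding H_def by (rule generate_is_subgroup[OF TG])
  have HG: "H \<subseteq> carrier G" using sgH subgroup.subset by blast
  have comm: "\<forall>x\<in>H. \<forall>y\<in>H. x \<otimes> y = y \<otimes> x" using assms(6) H_def by simp
  have ci: "\<forall>g\<in>carrier G. (\<forall>y\<in>H. g \<otimes> y = y \<otimes> g) \<or> (\<forall>y\<in>H. inv g \<otimes> y \<otimes> g = inv y)"
    using assms(8) H_def by simp
  have nH: "H \<lhd> G"
    unfolding normal_inv_iff
  proof (intro conjI sgH ballI)
    fix x h assume x: "x \<in> carrier G" and h: "h \<in> H"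
    have hc: "h \<in> carrier G" using h HG by blast
    from ci[rule_format, OF inv_closed[OF x]] show "x \<otimes> h \<otimes> inv x \<in> H"
    proof
      assume "\<forall>y\<in>H. inv x \<otimes> y = y \<otimes> inv x"
      then have "inv x \<otimes> h = h \<otimes> inv x" using h by blast
      then have "x \<otimes> h \<otimes> inv x = x \<otimes> (inv x \<otimes> h)" by (simp add: m_assoc x hc)
      also have "\<dots> = h" by (simp add: m_assoc[symmetric] x hc)
      finally show ?thesis using h by simp
    next
      assume "\<forall>y\<in>H. inv (inv x) \<otimes> y \<otimes> inv x = inv y"
      then have "x \<otimes> h \<otimes> inv x = inv h" using h x by simp
      then show ?thesis using h subgroup.m_inv_closed[OF sgH] by simp
    qed
  qed
  interpret N: normal H G by (rule nH)

  from assms(9) obtain cs where cs: "cs \<noteq> []" "distinct cs" "set cs = H"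
     "\<forall>i<length cs. cay_adj G T (cs!i) (cs!(Suc i mod length cs))"
    unfolding ham_cycle_def H_def by blast
  define n where "n = length cs"
  have n2: "n \<ge> 2"
  proof (rule ccontr)
    assume "\<not> 2 \<le> n"
    moreover have "length cs \<noteq> 0" using cs(1) by simp
    ultimately have "length cs = 1" unfolding n_def by linarith
    then obtain c where "cs = [c]" by (auto simp: length_Suc_conv)
    then have "H = {c}" using cs(3) by simp
    moreover have "\<one> \<in> H" unfolding H_def by (rule generate.one)
    ultimately have "H = {\<one>}" by simp
    with assms(7) H_def show False by simp
  qed

  from assms(10) obtain Cs where Cs: "distinct Cs" "set Cs = carrier (G Mod H)"
    "\<forall>i. Suc i < length Cs \<longrightarrow> cay_adj (G Mod H) ((\<lambda>s. H #> s) ` S) (Cs!i) (Cs!Suc i)"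
    unfolding ham_path_def H_def by blast
  have carrQ: "carrier (G Mod H) = rcosets H" by (simp add: FactGroup_def)
  have "H \<in> rcosets H" using N.subgroup_in_rcosets[OF assms(1)] .
  then have "Cs \<noteq> []" using Cs(2) carrQ by auto
  define m where "m = length Cs"
  then obtain m' where mm: "m = Suc m'" using \<open>Cs \<noteq> []\<close> by (cases Cs) auto

  have "\<forall>k. \<exists>s. Suc k < m \<longrightarrow> s \<in> carrier G \<and> (s \<in> S \<or> (\<exists>s0\<in>S. s = inv s0))
          \<and> Cs!Suc k = Cs!k <#> (H #> s)"
  proof
    fix k show "\<exists>s. Suc k < m \<longrightarrow> s \<in> carrier G \<and> (s \<in> S \<or> (\<exists>s0\<in>S. s = inv s0))
          \<and> Cs!Suc k = Cs!k <#> (H #> s)"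
    proof (cases "Suc k < m")
      case True
      from Cs(3)[rule_format, OF True[unfolded m_def]] obtain s where s: "s \<in> S" and
        ss: "Cs!Suc k = Cs!k \<otimes>\<^bsub>G Mod H\<^esub> (H #> s) \<or>
             Cs!Suc k = Cs!k \<otimes>\<^bsub>G Mod H\<^esub> inv\<^bsub>G Mod H\<^esub> (H #> s)"
        unfolding cay_adj_def by blast
      have sc: "s \<in> carrier G" using s assms(3) by blast
      have "H #> s \<in> carrier (G Mod H)" using carrQ sc by (auto simp: RCOSETS_def)
      then have iv: "inv\<^bsub>G Mod H\<^esub> (H #> s) = H #> inv s"
        using N.inv_FactGroup N.rcos_inv sc by simp
      from ss show ?thesis
      proof
        assume "Cs!Suc k = Cs!k \<otimes>\<^bsub>G Mod H\<^esub> (H #> s)"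
        then show ?thesis using s sc by (intro exI[of _ s]) simp
      next
        assume "Cs!Suc k = Cs!k \<otimes>\<^bsub>G Mod H\<^esub> inv\<^bsub>G Mod H\<^esub> (H #> s)"
        then show ?thesis using s sc iv by (intro exI[of _ "inv s"]) auto
      qed
    qed simp
  qed
  then obtain sp where sp: "\<And>k. Suc k < m \<Longrightarrow> sp k \<in> carrier G \<and> (sp k \<in> S \<or> (\<exists>s0\<in>S. sp k = inv s0))
          \<and> Cs!Suc k = Cs!k <#> (H #> sp k)"
    by metis
  have "Cs!0 \<in> rcosets H" using Cs(2) carrQ \<open>Cs \<noteq> []\<close> by (metis nth_mem length_greater_0_conv)
  then obtain t0 where t0: "t0 \<in> carrier G" "Cs!0 = H #> t0" by (auto simp: RCOSETS_def)
  define t where "t = rec_nat t0 (\<lambda>k tk. tk \<otimes> sp k)"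
  have t_simps: "t 0 = t0" "\<And>k. t (Suc k) = t k \<otimes> sp k" unfolding t_def by simp_all
  define \<sigma> where "\<sigma> = rec_nat True (\<lambda>k b. if (\<forall>y\<in>H. sp k \<otimes> y = y \<otimes> sp k) then b else \<not> b)"
  have \<sigma>_simps: "\<And>k. \<sigma> (Suc k) = (if (\<forall>y\<in>H. sp k \<otimes> y = y \<otimes> sp k) then \<sigma> k else \<not> \<sigma> k)"
    unfolding \<sigma>_def by simp
  have tc: "t k \<in> carrier G \<and> Cs!k = H #> t k" if "k < m" for k
    using that
  proof (induction k)
    case 0 then show ?case using t0 t_simps by simp
  next
    case (Suc k)
    then have IH: "t k \<in> carrier G" "Cs!k = H #> t k" by simp_all
    have spk: "sp k \<in> carrier G" "Cs!Suc k = Cs!k <#> (H #> sp k)" using sp[OF Suc.prems] by auto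
    show ?case using IH spk N.rcos_sum t_simps by simp
  qed
  define pw where "pw = (\<lambda>b h. if b then h else inv h)"
  have pwH: "pw b h \<in> H" if "h \<in> H" for b h
    using that subgroup.m_inv_closed[OF sgH] unfolding pw_def by auto
  have pwpw: "pw b (pw b h) = h" if "h \<in> H" for b h
    using that HG unfolding pw_def by auto
  have pwm: "pw b (x \<otimes> y) = pw b x \<otimes> pw b y" if "x \<in> H" "y \<in> H" for b x y
  proof -
    have "inv (x \<otimes> y) = inv y \<otimes> inv x" using that HG inv_mult_group by blast
    also have "\<dots> = inv x \<otimes> inv y" using comm subgroup.m_inv_closed[OF sgH] that by blast
    finally show ?thesis unfolding pw_def by simp
  qed
  have csH: "cs!j \<in> H" if "j < n" for j using that cs(3) n_def nth_mem by blast
  define f where "f = (\<lambda>(k,j). t k \<otimes> pw (\<sigma> k) (cs!j))"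
  define grid where "grid = {0..<m} \<times> {0..<n}"
  have fc: "f p \<in> carrier G" if "p \<in> grid" for p
    using that tc csH pwH HG unfolding f_def grid_def by (auto split: prod.splits)
  have mk: "\<And>s a a'. s \<in> S \<Longrightarrow> a' = a \<otimes> s \<or> a' = a \<otimes> inv s \<Longrightarrow> cay_adj G S a a'"
    unfolding cay_adj_def by blast
  have hor: "cay_adj G S (f (k,j)) (f (k, Suc j mod n))" if "k < m" "j < n" for k j
  proof -
    from cs(4)[rule_format, of j] that obtain x where x: "x \<in> T"
      "cs!(Suc j mod n) = cs!j \<otimes> x \<or> cs!(Suc j mod n) = cs!j \<otimes> inv x"
      unfolding cay_adj_def n_def by blast
    have xH: "x \<in> H" unfolding H_def using x(1) by (rule generate.incl)
    have xc: "x \<in> carrier G" using xH HG by blast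
    have xS: "x \<in> S" using x(1) assms(5) by blast
    obtain z where z: "z = x \<or> z = inv x" "cs!(Suc j mod n) = cs!j \<otimes> z" using x(2) by blast
    have zH: "z \<in> H" using z(1) xH subgroup.m_inv_closed[OF sgH] by blast
    have pz: "pw (\<sigma> k) z = x \<or> pw (\<sigma> k) z = inv x" using z(1) xc unfolding pw_def by auto
    have "f (k, Suc j mod n) = t k \<otimes> (pw (\<sigma> k) (cs!j) \<otimes> pw (\<sigma> k) z)"
      unfolding f_def using z(2) pwm csH[OF that(2)] zH by simp
    also have "\<dots> = f (k,j) \<otimes> pw (\<sigma> k) z"
    proof -
      have "t k \<in> carrier G" using tc[OF that(1)] by simp
      moreover have "pw (\<sigma> k) (cs!j) \<in> carrier G" using pwH csH[OF that(2)] HG by blast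
      moreover have "pw (\<sigma> k) z \<in> carrier G" using pwH zH HG by blast
      ultimately show ?thesis unfolding f_def by (simp add: m_assoc)
    qed
    finally have eq: "f (k, Suc j mod n) = f (k,j) \<otimes> pw (\<sigma> k) z" .
    from pz show ?thesis
    proof
      assume "pw (\<sigma> k) z = x" then show ?thesis using eq mk[OF xS] by simp
    next
      assume "pw (\<sigma> k) z = inv x" then show ?thesis using eq mk[OF xS] by simp
    qed
  qed
  have vert: "cay_adj G S (f (k,j)) (f (Suc k, j))" if "Suc k < m" "j < n" for k j
  proof -
    define s where "s = sp k"
    have s: "s \<in> carrier G" "s \<in> S \<or> (\<exists>s0\<in>S. s = inv s0)" using sp[OF that(1)] s_def by auto
    define y where "y = pw (\<sigma> k) (cs!j)"
    have yH: "y \<in> H" using y_def pwH csH that by blast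
    have yc: "y \<in> carrier G" using yH HG by blast
    have tk: "t k \<in> carrier G" using tc that by simp
    have key: "s \<otimes> pw (\<sigma> (Suc k)) (cs!j) = y \<otimes> s"
    proof (cases "\<forall>y\<in>H. s \<otimes> y = y \<otimes> s")
      case True
      then show ?thesis using \<sigma>_simps[of k] s_def y_def yH by simp
    next
      case False
      then have inv: "\<forall>y\<in>H. inv s \<otimes> y \<otimes> s = inv y" using ci s(1) by blast
      have "pw (\<sigma> (Suc k)) (cs!j) = inv y"
        using False \<sigma>_simps[of k] s_def y_def csH[OF that(2)] HG unfolding pw_def by auto
      then have "s \<otimes> pw (\<sigma> (Suc k)) (cs!j) = s \<otimes> (inv s \<otimes> y \<otimes> s)" using inv yH by simp
      also have "\<dots> = y \<otimes> s" using s(1) yc by (simp add: m_assoc[symmetric])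
      finally show ?thesis .
    qed
    have "f (Suc k, j) = t k \<otimes> (s \<otimes> pw (\<sigma> (Suc k)) (cs!j))"
      unfolding f_def using t_simps s_def tk s(1) pwH csH[OF that(2)] HG by (simp add: m_assoc subset_iff)
    also have "\<dots> = f (k,j) \<otimes> s" unfolding f_def using key tk yc s(1) y_def by (simp add: m_assoc)
    finally have eq: "f (Suc k, j) = f (k,j) \<otimes> s" .
    from s(2) show ?thesis
    proof
      assume "s \<in> S" then show ?thesis using eq mk by blast
    next
      assume "\<exists>s0\<in>S. s = inv s0"
      then obtain s0 where "s0 \<in> S" "s = inv s0" by blast
      then show ?thesis using eq mk by blast
    qed
  qed
  have adj: "cay_adj G S (f p) (f q)" if "p \<in> grid" "q \<in> grid" "gadj n p q" for p q
  proof -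
    obtain k j k' j' where pq: "p = (k,j)" "q = (k',j')" by (cases p, cases q) auto
    have r: "k < m" "j < n" "k' < m" "j' < n" using that(1,2) pq unfolding grid_def by auto
    have sym: "cay_adj G S (f q) (f p) \<Longrightarrow> cay_adj G S (f p) (f q)"
      using cay_adj_sym[OF assms(1,3)] fc that(1,2) by blast
    from that(3) pq show ?thesis unfolding gadj_def
      using hor vert r sym by auto
  qed
  have surj: "f ` grid = carrier G"
  proof
    show "f ` grid \<subseteq> carrier G" using fc by blast
  next
    show "carrier G \<subseteq> f ` grid"
    proof
      fix g assume g: "g \<in> carrier G"
      have "H #> g \<in> set Cs" using Cs(2) carrQ g by (auto simp: RCOSETS_def)
      then obtain k where k: "k < m" "Cs!k = H #> g" unfolding m_def by (metis in_set_conv_nth)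
      have tk: "t k \<in> carrier G" "Cs!k = H #> t k" using tc k(1) by auto
      have "g \<in> H #> t k" using k(2) tk(2) rcos_self[OF g sgH] by simp
      then obtain h where h: "h \<in> H" "g = h \<otimes> t k" unfolding r_coset_def by blast
      define h2 where "h2 = inv (t k) \<otimes> h \<otimes> t k"
      have h2H: "h2 \<in> H" using N.inv_op_closed1 tk(1) h(1) h2_def by simp
      have hc: "h \<in> carrier G" using h HG by blast
      have "t k \<otimes> h2 = g" using h2_def h tk hc by (simp add: m_assoc[symmetric])
      moreover have "pw (\<sigma> k) h2 \<in> set cs" using pwH h2H cs(3) by blast
      then obtain j where j: "j < n" "cs!j = pw (\<sigma> k) h2" unfolding n_def by (metis in_set_conv_nth)
      ultimately have "f (k,j) = g" unfolding f_def using pwpw h2H by simp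
      then show "g \<in> f ` grid" using k j unfolding grid_def by force
    qed
  qed
  have inj: "inj_on f grid"
  proof (rule inj_onI)
    fix p q assume p: "p \<in> grid" and q: "q \<in> grid" and e: "f p = f q"
    obtain k j k' j' where pq: "p = (k,j)" "q = (k',j')" by (cases p, cases q) auto
    have r: "k < m" "j < n" "k' < m" "j' < n" using p q pq unfolding grid_def by auto
    have inC: "f (a,b) \<in> H #> t a" if "a < m" "b < n" for a b
    proof -
      have "f (a,b) \<in> t a <# H" unfolding f_def l_coset_def using pwH csH that by auto
      then show ?thesis using N.coset_eq tc that by auto
    qed
    have "H #> t k = H #> f p" using repr_independence[OF inC[OF r(1,2)] _ sgH] tc r pq by auto
    moreover have "H #> t k' = H #> f q" using repr_independence[OF inC[OF r(3,4)] _ sgH] tc r pq by auto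
    ultimately have "Cs!k = Cs!k'" using tc r e by simp
    then have kk: "k = k'" using Cs(1) r unfolding m_def by (simp add: nth_eq_iff_index_eq)
    have "pw (\<sigma> k) (cs!j) = pw (\<sigma> k) (cs!j')"
      using e pq kk unfolding f_def using tc r pwH csH HG by (auto simp: subset_iff)
    then have "cs!j = cs!j'" using pwpw csH r by metis
    then have "j = j'" using cs(2) r unfolding n_def by (simp add: nth_eq_iff_index_eq)
    then show "p = q" using pq kk by simp
  qed
  obtain vs d where vs: "vs \<noteq> []" "hd vs = (m', 0)" "last vs = (m', d)" "d = 1 \<or> d = n - 1"
     "distinct vs" "set vs = {0..<Suc m'} \<times> {0..<n}" "successively (gadj n) vs"
    using grid_path[OF n2, of m'] by blast
  have sv: "set vs = grid" using vs(6) mm grid_def by simp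
  have "successively (\<lambda>x y. cay_adj G S (f x) (f y)) vs"
    using vs(7) by (rule successively_mono) (use adj sv in blast)
  then have s1: "successively (cay_adj G S) (map f vs)" by (simp add: successively_map)
  have gl: "gadj n (m', d) (m', 0)" using vs(4) n2 unfolding gadj_def by auto
  have "(m', d) \<in> grid" "(m', 0) \<in> grid" using vs(1-3) sv by (metis last_in_set hd_in_set)+
  then have "cay_adj G S (last (map f vs)) (hd (map f vs))"
    using adj gl vs(1-3) by (simp add: last_map hd_map)
  then have cyc: "\<forall>i<length (map f vs). cay_adj G S (map f vs ! i) (map f vs ! (Suc i mod length (map f vs)))"
    using succ_cyc[OF s1] vs(1) by simp
  show ?thesis unfolding ham_cycle_def
    using cyc vs(1,5) sv inj surj by (intro exI[of _ "map f vs"]) (auto simp: distinct_map)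
qed

end
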